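(* Fix $p\in[0,1]$ and let $(G_n)$ be a sequence of graphs with $\min_{u\in V}\delta_u=\omega(\log n)$. For each $n$ and $k$, run the $(k,p,\mathcal B)$-Edge-Majority dynamics on $G_n$ from the configuration in which every node is $\mathcal R$, and let $\mathbf P_k$ denote its law. For every $\gamma>0$ there exists $H=H(p,\gamma)$ such that: (Fast disruption) if $p>1/2$, then for all $k>H$, $\mathbf P_k\big(\mathrm{vol}(B^{(1)})/\mathrm{vol}(V)\ge1-\gamma\big)=1-o(1)$; (Slow disruption) if $p<1/2$, then for all $k>H$ and $K>0$, $\mathbf P_k\big(\forall t\in[0,n^K]:\ \mathrm{vol}(R^{(t)})/\mathrm{vol}(V)\ge1-\gamma\big)=1-o(1)$.
   Context: $G_n=(V,E)$, $V=\{1,\dots,n\}$, $N(u)$ neighbourhood, $\delta_u=|N(u)|$, $\mathrm{vol}(S)=\sum_{v\in S}\delta_v$; $o(1)$ refers to $n\to\infty$ for fixed $k$. States in $\{\mathcal R,\mathcal B\}$; $R^{(t)},B^{(t)}$ are the sets of nodes in each state at round $t$. $(k,p,\mathcal B)$-Edge-Majority: in each round $t\ge1$ every node $u$ independently samples $k$ neighbours uniformly at random with replacement; for each sampled $v$, independently, $u$ sees $v$ as $\mathcal B$ with probability $p$ and otherwise sees $v$'s true state at round $t-1$; $u$ adopts the state seen more often, ties broken uniformly at random. *)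

theory Defs
  imports "HOL-Probability.Probability"
begin

text \<open>Configurations: a node is in state B iff the configuration maps it to True,
  and in state R iff it maps it to False. Vertex set of G_n is {1..n}.
  A graph sequence is E :: nat => nat => nat => bool, with G_n having edge relation E n.\<close>

type_synonym config = "nat \<Rightarrow> bool"

definition nbhd :: "(nat \<Rightarrow> nat \<Rightarrow> bool) \<Rightarrow> nat \<Rightarrow> nat \<Rightarrow> nat set" where
  "nbhd G n u = {v \<in> {1..n}. G u v}"

definition deg :: "(nat \<Rightarrow> nat \<Rightarrow> bool) \<Rightarrow> nat \<Rightarrow> nat \<Rightarrow> nat" where
  "deg G n u = card (nbhd G n u)"

definition vol :: "(nat \<Rightarrow> nat \<Rightarrow> bool) \<Rightarrow> nat \<Rightarrow> nat set \<Rightarrow> real" where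
  "vol G n S = (\<Sum>v\<in>S. real (deg G n v))"

definition blue_set :: "nat \<Rightarrow> config \<Rightarrow> nat set" where
  "blue_set n c = {u \<in> {1..n}. c u}"

definition red_set :: "nat \<Rightarrow> config \<Rightarrow> nat set" where
  "red_set n c = {u \<in> {1..n}. \<not> c u}"

text \<open>One node's update: sample k neighbours uniformly with replacement, each paired
  with an independent coin that is True with probability p (then the neighbour is seen as B);
  otherwise the neighbour's true state is seen.\<close>

definition node_update :: "nat set \<Rightarrow> nat \<Rightarrow> real \<Rightarrow> config \<Rightarrow> bool pmf" where
  "node_update Nu k p c =
     bind_pmf (Pi_pmf {..<k} (0, False) (\<lambda>_. pair_pmf (pmf_of_set Nu) (bernoulli_pmf p)))
       (\<lambda>s. let b = card {i \<in> {..<k}. snd (s i) \<or> c (fst (s i))};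
                r = k - b
            in if b > r then return_pmf True
               else if b < r then return_pmf False
               else bernoulli_pmf (1/2))"

definition em_step :: "(nat \<Rightarrow> nat \<Rightarrow> bool) \<Rightarrow> nat \<Rightarrow> nat \<Rightarrow> real \<Rightarrow> config \<Rightarrow> config pmf" where
  "em_step G n k p c = Pi_pmf {1..n} False (\<lambda>u. node_update (nbhd G n u) k p c)"

fun em_path :: "(nat \<Rightarrow> nat \<Rightarrow> bool) \<Rightarrow> nat \<Rightarrow> nat \<Rightarrow> real \<Rightarrow> config \<Rightarrow> nat \<Rightarrow> config list pmf" where
  "em_path G n k p c0 0 = return_pmf [c0]"
| "em_path G n k p c0 (Suc T) =
     bind_pmf (em_path G n k p c0 T) (\<lambda>xs. map_pmf (\<lambda>c. xs @ [c]) (em_step G n k p (last xs)))"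

end

theory Submission
  imports Defs
begin


lemma prob_bind_pmf:
  "measure_pmf.prob (bind_pmf M f) A = measure_pmf.expectation M (\<lambda>x. measure_pmf.prob (f x) A)"
proof -
  have "ennreal (measure_pmf.prob (bind_pmf M f) A) = emeasure (bind_pmf M f) A"
    by (simp add: measure_pmf.emeasure_eq_measure)
  also have "\<dots> = (\<integral>\<^sup>+x. emeasure (f x) A \<partial>M)"
    by simp
  also have "\<dots> = (\<integral>\<^sup>+x. ennreal (measure_pmf.prob (f x) A) \<partial>M)"
    by (intro nn_integral_cong) (simp add: measure_pmf.emeasure_eq_measure)
  also have "\<dots> = ennreal (measure_pmf.expectation M (\<lambda>x. measure_pmf.prob (f x) A))"
    by (intro nn_integral_eq_integral measure_pmf.integrable_const_bound[where B=1]) auto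
  finally show ?thesis by (simp add: ennreal_inj integral_nonneg)
qed

lemma exp_mgf_bound:
  fixes a l :: real
  assumes "0 \<le> a" "a \<le> 1" "0 \<le> l" "l \<le> 1"
  shows "1 + (exp l - 1) * a \<le> exp (a * l + l^2)"
proof -
  have "exp l \<le> 1 + l + l^2" using exp_bound[of l] assms by simp
  hence "1 + (exp l - 1) * a \<le> 1 + (l + l^2) * a"
    using assms by (intro add_left_mono mult_right_mono) auto
  also have "\<dots> \<le> 1 + (a * l + l^2)"
    using assms by (auto simp: algebra_simps intro!: mult_left_le_one_le)
  also have "\<dots> \<le> exp (a * l + l^2)" by (rule exp_ge_add_one_self)
  finally show ?thesis .
qed

lemma expect_ind_exp:
  fixes F :: "'a pmf"
  shows "measure_pmf.expectation F (\<lambda>x. if Q x then exp l else 1) = 1 + (exp l - 1) * measure_pmf.prob F {x. Q x}"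
proof -
  have "(\<lambda>x. if Q x then exp l else 1) = (\<lambda>x. 1 + (exp l - 1) * indicator {x. Q x} x)"
    by (auto simp: fun_eq_iff)
  hence "measure_pmf.expectation F (\<lambda>x. if Q x then exp l else 1) =
     measure_pmf.expectation F (\<lambda>x. 1 + (exp l - 1) * indicator {x. Q x} x)" by simp
  also have "\<dots> = 1 + (exp l - 1) * measure_pmf.prob F {x. Q x}"
    by (subst Bochner_Integration.integral_add) (auto intro!: measure_pmf.integrable_const_bound[where B=1])
  finally show ?thesis .
qed

lemma chernoff_Pi:
  fixes F :: "'i \<Rightarrow> 'a pmf" and Q :: "'a \<Rightarrow> bool"
  assumes fin: "finite I" and JI: "J \<subseteq> I" and a0: "0 \<le> a" and a\<theta>: "a \<le> \<theta>" and \<theta>1: "\<theta> \<le> 1"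
    and pa: "\<And>i. i \<in> J \<Longrightarrow> measure_pmf.prob (F i) {x. Q x} \<le> a"
  shows "measure_pmf.prob (Pi_pmf I d F) {s. \<theta> * card J \<le> card {i\<in>J. Q (s i)}}
          \<le> exp (- real (card J) * (\<theta>-a)^2/4)"
proof -
  define l where "l = (\<theta> - a)/2"
  have l0: "0 \<le> l" and l1: "l \<le> 1" using a0 a\<theta> \<theta>1 by (auto simp: l_def)
  define m where "m = card J"
  define g where "g = (\<lambda>i x. if i \<in> J \<and> Q x then exp l else (1::real))"
  define u where "u = (\<lambda>s. \<Prod>i\<in>I. g i (s i))"
  have finJ: "finite J" using fin JI finite_subset by blast
  have u_eq: "u s = exp (l * card {i\<in>J. Q (s i)})" for s
  proof -
    have "u s = (\<Prod>i\<in>I. if i \<in> {i\<in>J. Q (s i)} then exp l else 1)"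
      unfolding u_def g_def by (intro prod.cong) auto
    also have "\<dots> = exp l ^ card (I \<inter> {i\<in>J. Q (s i)})"
      using fin by (simp add: prod.If_cases)
    also have "I \<inter> {i\<in>J. Q (s i)} = {i\<in>J. Q (s i)}" using JI by auto
    finally show ?thesis by (simp add: exp_of_nat_mult[symmetric] mult.commute)
  qed
  have sub: "{s. \<theta> * card J \<le> card {i\<in>J. Q (s i)}} \<subseteq> {s \<in> space (measure_pmf (Pi_pmf I d F)). exp (l * \<theta> * m) \<le> u s}"
  proof
    fix s assume "s \<in> {s. \<theta> * card J \<le> card {i\<in>J. Q (s i)}}"
    hence "l * (\<theta> * m) \<le> l * card {i\<in>J. Q (s i)}" using l0 by (auto simp: m_def intro: mult_left_mono)
    thus "s \<in> {s \<in> space (measure_pmf (Pi_pmf I d F)). exp (l * \<theta> * m) \<le> u s}"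
      by (simp add: u_eq mult.assoc)
  qed
  have intg: "integrable (measure_pmf (F i)) (g i)" for i
    unfolding g_def using l0 by (intro measure_pmf.integrable_const_bound[where B="exp l"]) auto
  have "measure_pmf.prob (Pi_pmf I d F) {s. \<theta> * card J \<le> card {i\<in>J. Q (s i)}}
     \<le> measure_pmf.prob (Pi_pmf I d F) {s \<in> space (measure_pmf (Pi_pmf I d F)). exp (l * \<theta> * m) \<le> u s}"
    by (rule measure_pmf.finite_measure_mono[OF sub]) simp
  also have "\<dots> \<le> measure_pmf.expectation (Pi_pmf I d F) u / exp (l * \<theta> * m)"
    unfolding u_def
    by (intro integral_Markov_inequality_measure[where A=UNIV] integrable_prod_Pi_pmf fin intg AE_pmfI)
       (auto simp: g_def intro!: prod_nonneg)
  also have "measure_pmf.expectation (Pi_pmf I d F) u = (\<Prod>i\<in>I. measure_pmf.expectation (F i) (g i))"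
    unfolding u_def by (intro expectation_prod_Pi_pmf fin intg) (auto simp: g_def)
  also have "\<dots> \<le> (\<Prod>i\<in>I. if i \<in> J then exp (a * l + l^2) else 1)"
  proof (intro prod_mono conjI)
    fix i assume "i \<in> I"
    show "0 \<le> measure_pmf.expectation (F i) (g i)"
      unfolding g_def by (intro Bochner_Integration.integral_nonneg) auto
    show "measure_pmf.expectation (F i) (g i) \<le> (if i \<in> J then exp (a * l + l^2) else 1)"
    proof (cases "i \<in> J")
      case True
      have "measure_pmf.expectation (F i) (g i) = 1 + (exp l - 1) * measure_pmf.prob (F i) {x. Q x}"
        using True by (simp add: g_def expect_ind_exp)
      also have "\<dots> \<le> 1 + (exp l - 1) * a"
        using pa[OF True] l0 by (intro add_left_mono mult_left_mono) auto
      also have "\<dots> \<le> exp (a * l + l^2)"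
        using a0 a\<theta> \<theta>1 l0 l1 by (intro exp_mgf_bound) auto
      finally show ?thesis using True by simp
    next
      case False
      thus ?thesis by (simp add: g_def)
    qed
  qed
  also have "(\<Prod>i\<in>I. if i \<in> J then exp (a * l + l^2) else 1) = exp (a * l + l^2) ^ m"
    using fin JI by (simp add: prod.If_cases m_def Int_absorb1)
  finally have "measure_pmf.prob (Pi_pmf I d F) {s. \<theta> * card J \<le> card {i\<in>J. Q (s i)}}
     \<le> exp (a * l + l^2) ^ m / exp (l * \<theta> * m)"
    by (simp add: divide_right_mono)
  also have "exp (a * l + l^2) ^ m / exp (l * \<theta> * m) = exp (m * (a * l + l^2) - l * \<theta> * m)"
    by (simp add: exp_of_nat_mult[symmetric] exp_diff)
  also have "m * (a * l + l^2) - l * \<theta> * m = - real m * (\<theta>-a)^2/4"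
    by (simp add: l_def power2_eq_square algebra_simps divide_simps)
  finally show ?thesis by (simp add: m_def)
qed

lemma pmf_le_prob_bind:
  fixes M :: "'a pmf"
  assumes "\<And>s. pmf (f s) y \<le> indicator E s"
  shows "pmf (bind_pmf M f) y \<le> measure_pmf.prob M E"
proof -
  have "pmf (bind_pmf M f) y = measure_pmf.expectation M (\<lambda>s. pmf (f s) y)" by (rule pmf_bind)
  also have "\<dots> \<le> measure_pmf.expectation M (indicator E)"
    using assms by (intro integral_mono measure_pmf.integrable_const_bound[where B=1]) (auto simp: pmf_le_1)
  also have "\<dots> = measure_pmf.prob M E" by simp
  finally show ?thesis .
qed

lemma prob_pair_Q_le:
  assumes "finite Nu" "Nu \<noteq> {}" "0 \<le> p" "p \<le> 1"
  shows "measure_pmf.prob (pair_pmf (pmf_of_set Nu) (bernoulli_pmf p)) {x. snd x \<or> c (fst x)}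
           \<le> p + card {v\<in>Nu. c v} / card Nu"
proof -
  let ?P = "pair_pmf (pmf_of_set Nu) (bernoulli_pmf p)"
  have "measure_pmf.prob ?P {x. snd x \<or> c (fst x)} \<le> measure_pmf.prob ?P {x. snd x} + measure_pmf.prob ?P {x. c (fst x)}"
    by (subst Collect_disj_eq) (rule measure_Un_le; simp)
  also have "measure_pmf.prob ?P {x. snd x} = measure_pmf.prob (map_pmf snd ?P) {True}"
    by (simp add: vimage_def)
  also have "\<dots> = p" using assms by (simp add: map_snd_pair_pmf measure_pmf_single)
  also have "measure_pmf.prob ?P {x. c (fst x)} = measure_pmf.prob (map_pmf fst ?P) {v. c v}"
    by (simp add: vimage_def)
  also have "\<dots> = card {v\<in>Nu. c v} / card Nu" using assms
    by (simp add: map_fst_pair_pmf measure_pmf_of_set Int_def conj_commute)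
  finally show ?thesis .
qed

lemma prob_pair_notQ_le:
  assumes "0 \<le> p" "p \<le> 1"
  shows "measure_pmf.prob (pair_pmf (pmf_of_set Nu) (bernoulli_pmf p)) {x. \<not> (snd x \<or> c (fst x))} \<le> 1 - p"
proof -
  let ?P = "pair_pmf (pmf_of_set Nu) (bernoulli_pmf p)"
  have "measure_pmf.prob ?P {x. \<not> (snd x \<or> c (fst x))} \<le> measure_pmf.prob ?P {x. \<not> snd x}"
    by (intro measure_pmf.finite_measure_mono) auto
  also have "measure_pmf.prob ?P {x. \<not> snd x} = measure_pmf.prob (map_pmf snd ?P) {False}"
    by (simp add: vimage_def)
  also have "\<dots> = 1 - p" using assms by (simp add: map_snd_pair_pmf measure_pmf_single)
  finally show ?thesis .
qed

lemma card_split: "card {i\<in>{..<k::nat}. P i} + card {i\<in>{..<k}. \<not> P i} = k"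
proof -
  have "card ({i\<in>{..<k}. P i} \<union> {i\<in>{..<k}. \<not> P i}) = card {i\<in>{..<k}. P i} + card {i\<in>{..<k}. \<not> P i}"
    by (rule card_Un_disjoint) auto
  moreover have "{i\<in>{..<k}. P i} \<union> {i\<in>{..<k}. \<not> P i} = {..<k}" by auto
  ultimately show ?thesis by simp
qed

lemma node_blue_bound:
  assumes "finite Nu" "Nu \<noteq> {}" "0 \<le> p" "p \<le> 1" "0 \<le> x" "x \<le> 1/2"
    and "p + card {v\<in>Nu. c v} / card Nu \<le> x"
  shows "pmf (node_update Nu k p c) True \<le> exp (- real k * (1/2 - x)^2/4)"
proof -
  let ?Q = "\<lambda>x. snd x \<or> c (fst x)"
  let ?E = "{s. 1/2 * real (card {..<k}) \<le> card {i\<in>{..<k}. ?Q (s i)}}"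
  have "pmf (node_update Nu k p c) True \<le> measure_pmf.prob (Pi_pmf {..<k} (0, False) (\<lambda>_. pair_pmf (pmf_of_set Nu) (bernoulli_pmf p))) ?E"
    unfolding node_update_def Let_def
  proof (rule pmf_le_prob_bind)
    fix s :: "nat \<Rightarrow> nat \<times> bool"
    define b where "b = card {i \<in> {..<k}. snd (s i) \<or> c (fst (s i))}"
    have "b \<le> k" unfolding b_def by (metis (no_types, lifting) card_lessThan card_mono finite_lessThan mem_Collect_eq subsetI)
    have [simp]: "card {i. i < k \<and> (snd (s i) \<or> c (fst (s i)))} = b" by (simp add: b_def)
    show "pmf (if k - b < b then return_pmf True else if b < k - b then return_pmf False else bernoulli_pmf (1 / 2)) True \<le> indicator ?E s"
      using \<open>b \<le> k\<close> by (auto simp: b_def[symmetric] indicator_def)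
  qed
  also have "\<dots> \<le> exp (- real (card {..<k}) * (1/2 - x)^2/4)"
  proof (rule chernoff_Pi)
    fix i :: nat
    show "measure_pmf.prob (pair_pmf (pmf_of_set Nu) (bernoulli_pmf p)) {x. ?Q x} \<le> x"
      using prob_pair_Q_le[OF assms(1-4), of c] assms(7) by linarith
  qed (use assms in auto)
  finally show ?thesis by simp
qed

lemma node_red_bound:
  assumes "0 \<le> p" "p \<le> 1" "1/2 \<le> p"
  shows "pmf (node_update Nu k p c) False \<le> exp (- real k * (p - 1/2)^2/4)"
proof -
  let ?Q = "\<lambda>x. \<not> (snd x \<or> c (fst x))"
  let ?E = "{s. 1/2 * real (card {..<k}) \<le> card {i\<in>{..<k}. ?Q (s i)}}"
  have "pmf (node_update Nu k p c) False \<le> measure_pmf.prob (Pi_pmf {..<k} (0, False) (\<lambda>_. pair_pmf (pmf_of_set Nu) (bernoulli_pmf p))) ?E"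
    unfolding node_update_def Let_def
  proof (rule pmf_le_prob_bind)
    fix s :: "nat \<Rightarrow> nat \<times> bool"
    define b where "b = card {i \<in> {..<k}. snd (s i) \<or> c (fst (s i))}"
    have "b + card {i\<in>{..<k}. ?Q (s i)} = k"
      unfolding b_def by (rule card_split)
    have [simp]: "card {i. i < k \<and> (snd (s i) \<or> c (fst (s i)))} = b" by (simp add: b_def)
    have [simp]: "card {i. i < k \<and> \<not> snd (s i) \<and> \<not> c (fst (s i))} = k - b"
      using \<open>b + card {i\<in>{..<k}. ?Q (s i)} = k\<close> by simp
    show "pmf (if k - b < b then return_pmf True else if b < k - b then return_pmf False else bernoulli_pmf (1 / 2)) False \<le> indicator ?E s"
      by (auto simp: b_def[symmetric] indicator_def)
  qed
  also have "\<dots> \<le> exp (- real (card {..<k}) * (1/2 - (1-p))^2/4)"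
  proof (rule chernoff_Pi)
    fix i :: nat
    show "measure_pmf.prob (pair_pmf (pmf_of_set Nu) (bernoulli_pmf p)) {x. ?Q x} \<le> 1 - p"
      using prob_pair_notQ_le[OF assms(1,2)] by simp
  qed (use assms in auto)
  finally show ?thesis by (simp add: algebra_simps)
qed




lemma nbhd_sub: "nbhd G n u \<subseteq> {1..n}" by (auto simp: nbhd_def)
lemma finite_nbhd[simp]: "finite (nbhd G n u)" by (rule finite_subset[OF nbhd_sub]) auto

lemma vol_bound:
  fixes \<theta> :: real
  assumes sym: "\<And>u v. G u v \<longleftrightarrow> G v u" and S: "S \<subseteq> {1..n}"
    and b: "\<And>u. u \<in> {1..n} \<Longrightarrow> real (card {v\<in>nbhd G n u. v \<in> S}) \<le> \<theta> * deg G n u"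
  shows "vol G n S \<le> \<theta> * vol G n {1..n}"
proof -
  have "vol G n S = (\<Sum>v\<in>S. \<Sum>u\<in>{1..n}. if G v u then 1 else 0)"
    unfolding vol_def deg_def nbhd_def by (intro sum.cong refl) (simp add: sum.If_cases Int_def)
  also have "\<dots> = (\<Sum>u\<in>{1..n}. \<Sum>v\<in>S. if G u v then 1 else 0)"
    by (subst sum.swap) (simp add: sym)
  also have "\<dots> = (\<Sum>u\<in>{1..n}. real (card {v\<in>nbhd G n u. v \<in> S}))"
  proof (intro sum.cong refl)
    fix u assume "u \<in> {1..n}"
    have "{v\<in>nbhd G n u. v \<in> S} = S \<inter> {v. G u v}" using S by (auto simp: nbhd_def)
    moreover have "finite S" using S finite_subset by blast
    ultimately show "(\<Sum>v\<in>S. if G u v then 1 else 0) = real (card {v\<in>nbhd G n u. v \<in> S})"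
      by (simp add: sum.If_cases)
  qed
  also have "\<dots> \<le> (\<Sum>u\<in>{1..n}. \<theta> * deg G n u)" by (intro sum_mono b)
  also have "\<dots> = \<theta> * vol G n {1..n}" by (simp add: vol_def sum_distrib_left)
  finally show ?thesis .
qed

lemma vol_red_blue: "vol G n (red_set n c) + vol G n (blue_set n c) = vol G n {1..n}"
proof -
  have "vol G n (red_set n c \<union> blue_set n c) = vol G n (red_set n c) + vol G n (blue_set n c)"
    unfolding vol_def by (rule sum.union_disjoint) (auto simp: red_set_def blue_set_def)
  moreover have "red_set n c \<union> blue_set n c = {1..n}" by (auto simp: red_set_def blue_set_def)
  ultimately show ?thesis by simp
qed

lemma step_bad_bound:
  fixes a \<theta> :: real
  assumes "0 \<le> a" "a \<le> \<theta>" "\<theta> \<le> 1"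
    and pa: "\<And>v. v \<in> {1..n} \<Longrightarrow> measure_pmf.prob (F v) {x. Q x} \<le> a"
    and md: "\<And>u. u \<in> {1..n} \<Longrightarrow> m \<le> deg G n u"
  shows "measure_pmf.prob (Pi_pmf {1..n} d F)
           {c'. \<exists>u\<in>{1..n}. \<theta> * deg G n u \<le> card {v\<in>nbhd G n u. Q (c' v)}}
         \<le> n * exp (- real m * (\<theta>-a)^2/4)"
proof -
  let ?A = "\<lambda>u. {c'. \<theta> * card (nbhd G n u) \<le> card {v\<in>nbhd G n u. Q (c' v)}}"
  have "{c'. \<exists>u\<in>{1..n}. \<theta> * deg G n u \<le> card {v\<in>nbhd G n u. Q (c' v)}} = (\<Union>u\<in>{1..n}. ?A u)"
    by (auto simp: deg_def)
  hence "measure_pmf.prob (Pi_pmf {1..n} d F) {c'. \<exists>u\<in>{1..n}. \<theta> * deg G n u \<le> card {v\<in>nbhd G n u. Q (c' v)}}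
        \<le> (\<Sum>u\<in>{1..n}. measure_pmf.prob (Pi_pmf {1..n} d F) (?A u))"
    by (simp add: measure_UNION_le)
  also have "\<dots> \<le> (\<Sum>u\<in>{1..n}. exp (- real m * (\<theta>-a)^2/4))"
  proof (intro sum_mono)
    fix u assume u: "u \<in> {1..n}"
    have "measure_pmf.prob (Pi_pmf {1..n} d F) (?A u) \<le> exp (- real (card (nbhd G n u)) * (\<theta>-a)^2/4)"
      by (rule chernoff_Pi) (use assms nbhd_sub in \<open>auto simp: nbhd_def\<close>)
    also have "\<dots> \<le> exp (- real m * (\<theta>-a)^2/4)"
      using md[OF u] by (auto simp: deg_def intro!: mult_right_mono)
    finally show "measure_pmf.prob (Pi_pmf {1..n} d F) (?A u) \<le> exp (- real m * (\<theta>-a)^2/4)" .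
  qed
  also have "\<dots> = n * exp (- real m * (\<theta>-a)^2/4)" by simp
  finally show ?thesis .
qed

lemma em_path_length: "xs \<in> set_pmf (em_path G n k p c0 T) \<Longrightarrow> length xs = Suc T"
  by (induction T arbitrary: xs) auto

lemma path_bound:
  assumes step: "\<And>c. Good c \<Longrightarrow> measure_pmf.prob (em_step G n k p c) {c'. \<not> Good c'} \<le> \<epsilon>"
    and g0: "Good c0"
  shows "measure_pmf.prob (em_path G n k p c0 T) {xs. \<exists>t\<le>T. \<not> Good (xs ! t)} \<le> T * \<epsilon>"
proof (induction T)
  case 0
  thus ?case using g0 by simp
next
  case (Suc T)
  let ?B = "{xs. \<exists>t\<le>T. \<not> Good (xs ! t)}"
  have "measure_pmf.prob (em_path G n k p c0 (Suc T)) {xs. \<exists>t\<le>Suc T. \<not> Good (xs ! t)}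
     = measure_pmf.expectation (em_path G n k p c0 T)
         (\<lambda>xs. measure_pmf.prob (em_step G n k p (last xs)) {c. \<exists>t\<le>Suc T. \<not> Good ((xs @ [c]) ! t)})"
    by (simp add: prob_bind_pmf vimage_def)
  also have "\<dots> \<le> measure_pmf.expectation (em_path G n k p c0 T) (\<lambda>xs. indicator ?B xs + \<epsilon>)"
  proof (intro integral_mono_AE AE_pmfI measure_pmf.integrable_const_bound[where B="1 + \<bar>\<epsilon>\<bar>"])
    fix xs assume xs: "xs \<in> set_pmf (em_path G n k p c0 T)"
    hence len: "length xs = Suc T" by (rule em_path_length)
    show "measure_pmf.prob (em_step G n k p (last xs)) {c. \<exists>t\<le>Suc T. \<not> Good ((xs @ [c]) ! t)} \<le> indicator ?B xs + \<epsilon>"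
    proof (cases "xs \<in> ?B")
      case True
      have "\<epsilon> \<ge> 0" using step[OF g0] measure_nonneg[of "measure_pmf (em_step G n k p c0)"] by (meson order_trans)
      thus ?thesis using True by (simp add: measure_pmf.prob_le_1 add_increasing2)
    next
      case False
      have "xs \<noteq> []" using len by auto
      hence "last xs = xs ! T" using len by (simp add: last_conv_nth)
      hence gl: "Good (last xs)" using False by auto
      have "{c. \<exists>t\<le>Suc T. \<not> Good ((xs @ [c]) ! t)} \<subseteq> {c'. \<not> Good c'}"
      proof
        fix c assume "c \<in> {c. \<exists>t\<le>Suc T. \<not> Good ((xs @ [c]) ! t)}"
        then obtain t where t: "t \<le> Suc T" "\<not> Good ((xs @ [c]) ! t)" by auto
        show "c \<in> {c'. \<not> Good c'}"
        proof (cases "t = Suc T")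
          case True thus ?thesis using t len by (simp add: nth_append)
        next
          case False thus ?thesis using t len \<open>xs \<notin> ?B\<close> by (auto simp: nth_append)
        qed
      qed
      hence "measure_pmf.prob (em_step G n k p (last xs)) {c. \<exists>t\<le>Suc T. \<not> Good ((xs @ [c]) ! t)}
             \<le> measure_pmf.prob (em_step G n k p (last xs)) {c'. \<not> Good c'}"
        by (rule measure_pmf.finite_measure_mono) simp
      also have "\<dots> \<le> \<epsilon>" by (rule step[OF gl])
      finally show ?thesis using False by simp
    qed
  qed (auto simp: indicator_def intro: order_trans[OF measure_pmf.prob_le_1])
  also have "\<dots> = measure_pmf.prob (em_path G n k p c0 T) ?B + \<epsilon>"
    by (subst Bochner_Integration.integral_add) (auto intro!: measure_pmf.integrable_const_bound[where B=1])
  also have "\<dots> \<le> T * \<epsilon> + \<epsilon>" using Suc by simp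
  finally show ?case by (simp add: algebra_simps)
qed




lemma vol_pos:
  assumes "1 \<le> n" "\<And>u. u \<in> {1..n} \<Longrightarrow> 1 \<le> deg G n u"
  shows "vol G n {1..n} > 0"
proof -
  have "vol G n {1..n} \<ge> real (deg G n 1)"
    unfolding vol_def using assms(1) by (intro member_le_sum) auto
  moreover have "deg G n 1 \<ge> 1" using assms by auto
  ultimately show ?thesis by simp
qed

lemma slow_n:
  fixes \<theta> :: real
  assumes sym: "\<And>u v. G u v \<longleftrightarrow> G v u" and n1: "1 \<le> n" and m1: "1 \<le> m"
    and md: "\<And>u. u \<in> {1..n} \<Longrightarrow> m \<le> deg G n u"
    and p0: "0 \<le> p" and p1: "p \<le> 1" and \<theta>0: "0 < \<theta>" and \<theta>1: "\<theta> \<le> 1" and p\<theta>: "p + \<theta> \<le> 1/2"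
    and kb: "exp (- real k * (1/2 - (p + \<theta>))^2/4) \<le> \<theta>/2"
  shows "measure_pmf.prob (em_path G n k p (\<lambda>_. False) T)
           {xs. \<forall>t\<le>T. vol G n (red_set n (xs ! t)) / vol G n {1..n} \<ge> 1 - \<theta>}
         \<ge> 1 - T * (n * exp (- real m * (\<theta> - \<theta>/2)^2/4))"
proof -
  define Good where "Good = (\<lambda>c. \<not> (\<exists>u\<in>{1..n}. \<theta> * deg G n u \<le> card {v\<in>nbhd G n u. c v}))"
  define \<epsilon> where "\<epsilon> = n * exp (- real m * (\<theta> - \<theta>/2)^2/4)"
  have degpos: "u \<in> {1..n} \<Longrightarrow> 1 \<le> deg G n u" for u using md m1 by (meson order_trans)
  have volpos: "vol G n {1..n} > 0" using vol_pos[OF n1 degpos] by blast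
  have step: "measure_pmf.prob (em_step G n k p c) {c'. \<not> Good c'} \<le> \<epsilon>" if gc: "Good c" for c
  proof -
    have "measure_pmf.prob (em_step G n k p c) {c'. \<not> Good c'} =
      measure_pmf.prob (Pi_pmf {1..n} False (\<lambda>u. node_update (nbhd G n u) k p c))
        {c'. \<exists>u\<in>{1..n}. \<theta> * deg G n u \<le> card {v\<in>nbhd G n u. (\<lambda>x. x) (c' v)}}"
      by (simp add: em_step_def Good_def)
    also have "\<dots> \<le> \<epsilon>" unfolding \<epsilon>_def
    proof (rule step_bad_bound)
      fix v assume v: "v \<in> {1..n}"
      have ne: "nbhd G n v \<noteq> {}" using degpos[OF v] by (auto simp: deg_def)
      have dpos: "real (card (nbhd G n v)) > 0" using degpos[OF v] by (simp add: deg_def)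
      have "real (card {w\<in>nbhd G n v. c w}) < \<theta> * card (nbhd G n v)"
        using gc v by (auto simp: Good_def deg_def not_le)
      hence "card {w\<in>nbhd G n v. c w} / card (nbhd G n v) \<le> \<theta>"
        using dpos by (simp add: divide_simps mult.commute)
      hence "pmf (node_update (nbhd G n v) k p c) True \<le> exp (- real k * (1/2 - (p + \<theta>))^2/4)"
        using p0 p1 \<theta>0 p\<theta> ne by (intro node_blue_bound) auto
      also have "\<dots> \<le> \<theta>/2" by (rule kb)
      finally have "pmf (node_update (nbhd G n v) k p c) True \<le> \<theta>/2" .
      moreover have "{x. x} = {True}" by auto
      ultimately show "measure_pmf.prob (node_update (nbhd G n v) k p c) {x. x} \<le> \<theta>/2"
        by (simp add: measure_pmf_single)
    qed (use \<theta>0 \<theta>1 md in auto)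
    finally show ?thesis .
  qed
  have dp: "0 < \<theta> * deg G n u" if "u \<in> {1..n}" for u
  proof -
    have "(1::real) \<le> deg G n u" using degpos[OF that] by simp
    thus ?thesis using \<theta>0 by simp
  qed
  have g0: "Good (\<lambda>_. False)" using dp by (force simp: Good_def not_le)
  have bad: "measure_pmf.prob (em_path G n k p (\<lambda>_. False) T) {xs. \<exists>t\<le>T. \<not> Good (xs ! t)} \<le> T * \<epsilon>"
    by (rule path_bound[OF step g0])
  have good_red: "vol G n (red_set n c) / vol G n {1..n} \<ge> 1 - \<theta>" if "Good c" for c
  proof -
    have "vol G n (blue_set n c) \<le> \<theta> * vol G n {1..n}"
    proof (rule vol_bound[OF sym])
      fix u assume u: "u \<in> {1..n}"
      have "{v\<in>nbhd G n u. v \<in> blue_set n c} = {v\<in>nbhd G n u. c v}"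
        by (auto simp: blue_set_def nbhd_def)
      moreover have "\<not> \<theta> * deg G n u \<le> card {v\<in>nbhd G n u. c v}" using that u unfolding Good_def by blast
      ultimately show "real (card {v\<in>nbhd G n u. v \<in> blue_set n c}) \<le> \<theta> * deg G n u"
        by simp
    qed (auto simp: blue_set_def)
    hence "vol G n (red_set n c) \<ge> (1 - \<theta>) * vol G n {1..n}"
      using vol_red_blue[of G n c] by (simp add: algebra_simps)
    thus ?thesis using volpos by (simp add: divide_simps)
  qed
  have "{xs. \<forall>t\<le>T. \<not> \<not> Good (xs ! t)} \<subseteq> {xs. \<forall>t\<le>T. vol G n (red_set n (xs ! t)) / vol G n {1..n} \<ge> 1 - \<theta>}"
    using good_red by auto
  hence "measure_pmf.prob (em_path G n k p (\<lambda>_. False) T) {xs. \<forall>t\<le>T. \<not> \<not> Good (xs ! t)}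
      \<le> measure_pmf.prob (em_path G n k p (\<lambda>_. False) T) {xs. \<forall>t\<le>T. vol G n (red_set n (xs ! t)) / vol G n {1..n} \<ge> 1 - \<theta>}"
    by (rule measure_pmf.finite_measure_mono) simp
  moreover have "{xs. \<forall>t\<le>T. \<not> \<not> Good (xs ! t)} = UNIV - {xs. \<exists>t\<le>T. \<not> Good (xs ! t)}" by auto
  ultimately show ?thesis using bad measure_pmf.prob_compl[of "{xs. \<exists>t\<le>T. \<not> Good (xs ! t)}" "em_path G n k p (\<lambda>_. False) T"]
    by (simp add: \<epsilon>_def)
qed

lemma em_path_1: "em_path G n k p c0 1 = map_pmf (\<lambda>c. [c0, c]) (em_step G n k p c0)"
  by (simp add: bind_return_pmf)

lemma fast_n:
  fixes g :: real
  assumes sym: "\<And>u v. G u v \<longleftrightarrow> G v u" and n1: "1 \<le> n" and m1: "1 \<le> m"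
    and md: "\<And>u. u \<in> {1..n} \<Longrightarrow> m \<le> deg G n u"
    and p0: "1/2 \<le> p" and p1: "p \<le> 1" and g0: "0 < g" and g1: "g \<le> 1"
    and kb: "exp (- real k * (p - 1/2)^2/4) \<le> g/2"
  shows "measure_pmf.prob (em_path G n k p (\<lambda>_. False) 1)
           {xs. vol G n (blue_set n (xs ! 1)) / vol G n {1..n} \<ge> 1 - g}
         \<ge> 1 - n * exp (- real m * (g - g/2)^2/4)"
proof -
  define Bad where "Bad = {c'. \<exists>u\<in>{1..n}. g * deg G n u \<le> card {v\<in>nbhd G n u. \<not> c' v}}"
  have degpos: "u \<in> {1..n} \<Longrightarrow> 1 \<le> deg G n u" for u using md m1 by (meson order_trans)
  have volpos: "vol G n {1..n} > 0" using vol_pos[OF n1 degpos] by blast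
  have bad: "measure_pmf.prob (em_step G n k p (\<lambda>_. False)) Bad \<le> n * exp (- real m * (g - g/2)^2/4)"
    unfolding em_step_def Bad_def
  proof (rule step_bad_bound)
    fix v assume v: "v \<in> {1..n}"
    have "pmf (node_update (nbhd G n v) k p (\<lambda>_. False)) False \<le> g/2"
      using node_red_bound[of p "nbhd G n v" k "\<lambda>_. False"] p0 p1 kb by linarith
    show "measure_pmf.prob (node_update (nbhd G n v) k p (\<lambda>_. False)) {x. \<not> x} \<le> g/2"
    proof -
      have "{x. \<not> x} = {False}" by auto
      thus ?thesis using \<open>pmf (node_update (nbhd G n v) k p (\<lambda>_. False)) False \<le> g/2\<close> by (simp add: measure_pmf_single)
    qed
  qed (use g0 g1 md in auto)
  have good_blue: "vol G n (blue_set n c) / vol G n {1..n} \<ge> 1 - g" if "c \<notin> Bad" for c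
  proof -
    have "vol G n (red_set n c) \<le> g * vol G n {1..n}"
    proof (rule vol_bound[OF sym])
      fix u assume u: "u \<in> {1..n}"
      have "{v\<in>nbhd G n u. v \<in> red_set n c} = {v\<in>nbhd G n u. \<not> c v}"
        by (auto simp: red_set_def nbhd_def)
      moreover have "\<not> g * deg G n u \<le> card {v\<in>nbhd G n u. \<not> c v}" using that u unfolding Bad_def by blast
      ultimately show "real (card {v\<in>nbhd G n u. v \<in> red_set n c}) \<le> g * deg G n u"
        by simp
    qed (auto simp: red_set_def)
    hence "vol G n (blue_set n c) \<ge> (1 - g) * vol G n {1..n}"
      using vol_red_blue[of G n c] by (simp add: algebra_simps)
    thus ?thesis using volpos by (simp add: divide_simps)
  qed
  have "measure_pmf.prob (em_step G n k p (\<lambda>_. False)) (UNIV - Bad)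
      \<le> measure_pmf.prob (em_step G n k p (\<lambda>_. False)) {c. vol G n (blue_set n c) / vol G n {1..n} \<ge> 1 - g}"
    using good_blue by (intro measure_pmf.finite_measure_mono) auto
  moreover have "measure_pmf.prob (em_path G n k p (\<lambda>_. False) 1)
           {xs. vol G n (blue_set n (xs ! 1)) / vol G n {1..n} \<ge> 1 - g}
      = measure_pmf.prob (em_step G n k p (\<lambda>_. False)) {c. vol G n (blue_set n c) / vol G n {1..n} \<ge> 1 - g}"
    unfolding em_path_1 by (simp add: vimage_def)
  ultimately show ?thesis using bad measure_pmf.prob_compl[of Bad "em_step G n k p (\<lambda>_. False)"] by simp
qed




lemma asym:
  fixes mm :: "nat \<Rightarrow> nat" and c K :: real
  assumes lim: "filterlim (\<lambda>n. real (mm n) / ln (real n)) at_top sequentially" and c: "c > 0" and K: "K \<ge> 0"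
  shows "eventually (\<lambda>n. 1 \<le> mm n \<and> 1 \<le> n \<and> real n powr (K+1) * exp (- real (mm n) * c) \<le> 1 / real n) sequentially"
proof -
  define C where "C = max 1 ((K+2)/c)"
  have "eventually (\<lambda>n. C \<le> real (mm n) / ln (real n)) sequentially" using lim by (simp add: filterlim_at_top)
  moreover have "eventually (\<lambda>n. 3 \<le> n) sequentially" by (rule eventually_ge_at_top)
  ultimately show ?thesis
  proof eventually_elim
    case (elim n)
    have n0: "real n > 0" using elim by simp
    have "exp 1 \<le> real n" using exp_le elim by linarith
    hence ln1: "1 \<le> ln (real n)" using n0 by (simp add: ln_ge_iff)
    have mC: "C * ln (real n) \<le> real (mm n)" using elim ln1 by (simp add: pos_le_divide_eq)
    have C1: "1 \<le> C" and CK: "(K+2)/c \<le> C" by (auto simp: C_def)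
    have "1 \<le> C * ln (real n)" using C1 ln1 by (metis mult_mono' mult_1 zero_le_one)
    hence m1: "1 \<le> mm n" using mC by linarith
    have "(K+2)/c * ln (real n) \<le> real (mm n)" using CK ln1 mC by (meson mult_right_mono order_trans le_numeral_extra(1) order.trans zero_le_one)
    hence Km: "(K+2) * ln (real n) \<le> real (mm n) * c" using c by (simp add: field_simps)
    have "real n powr (K+1) * exp (- real (mm n) * c) = exp ((K+1) * ln (real n) - real (mm n) * c)"
      using n0 by (simp add: powr_def exp_diff exp_minus field_simps)
    also have "\<dots> \<le> exp (- ln (real n))" using Km by (simp add: algebra_simps)
    also have "\<dots> = 1 / real n" using n0 by (simp add: exp_minus inverse_eq_divide)
    finally show ?case using m1 elim by simp
  qed
qed

lemma k_bound:
  fixes d g :: real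
  assumes "d > 0" "0 < g" "real k > 4 * ln (2/g) / d^2"
  shows "exp (- real k * d^2/4) \<le> g/2"
proof -
  have "4 * ln (2/g) < real k * d^2" using assms by (simp add: divide_less_eq)
  hence "- real k * d^2/4 < ln (g/2)" using assms by (simp add: ln_div)
  hence "exp (- real k * d^2/4) < exp (ln (g/2))" by simp
  thus ?thesis using assms by simp
qed

lemma sandwich1:
  fixes f :: "nat \<Rightarrow> real"
  assumes "eventually (\<lambda>n. 1 - 1 / real n \<le> f n) sequentially" "\<And>n. f n \<le> 1"
  shows "f \<longlonglongrightarrow> 1"
proof (rule tendsto_sandwich[of "\<lambda>n. 1 - 1 / real n" f sequentially "\<lambda>_. 1"])
  show "(\<lambda>n. 1 - 1 / real n) \<longlonglongrightarrow> 1"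
    using tendsto_diff[OF tendsto_const lim_1_over_n, of 1] by simp
qed (use assms in auto)




lemma fast_thm:
  fixes p \<gamma> :: real and E :: "nat \<Rightarrow> nat \<Rightarrow> nat \<Rightarrow> bool"
  assumes p: "1/2 < p" "p \<le> 1" and \<gamma>: "\<gamma> > 0"
    and sym: "\<forall>n u v. E n u v \<longleftrightarrow> E n v u"
    and lim: "filterlim (\<lambda>n. real (Min ((\<lambda>u. deg (E n) n u) ` {1..n})) / ln (real n)) at_top sequentially"
    and k: "real k > 4 * ln (2 / min \<gamma> 1) / (p - 1/2)^2"
  shows "(\<lambda>n. measure_pmf.prob (em_path (E n) n k p (\<lambda>_. False) 1)
             {xs. vol (E n) n (blue_set n (xs ! 1)) / vol (E n) n {1..n} \<ge> 1 - \<gamma>}) \<longlonglongrightarrow> 1"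
proof (rule sandwich1)
  define g where "g = min \<gamma> 1"
  have g0: "0 < g" and g1: "g \<le> 1" and g\<gamma>: "g \<le> \<gamma>" using \<gamma> by (auto simp: g_def)
  define mm where "mm = (\<lambda>n. Min ((\<lambda>u. deg (E n) n u) ` {1..n}))"
  have kb: "exp (- real k * (p - 1/2)^2/4) \<le> g/2"
    using k_bound[of "p - 1/2" g k] p g0 k by (simp add: g_def)
  have c0: "(g - g/2)^2/4 > 0" using g0 by simp
  have ev: "eventually (\<lambda>n. 1 \<le> mm n \<and> 1 \<le> n \<and> real n powr (0+1) * exp (- real (mm n) * ((g - g/2)^2/4)) \<le> 1 / real n) sequentially"
    by (rule asym[OF _ c0]) (use lim in \<open>simp_all add: mm_def\<close>)
  show "eventually (\<lambda>n. 1 - 1 / real n \<le> measure_pmf.prob (em_path (E n) n k p (\<lambda>_. False) 1)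
             {xs. vol (E n) n (blue_set n (xs ! 1)) / vol (E n) n {1..n} \<ge> 1 - \<gamma>}) sequentially"
    using ev
  proof eventually_elim
    case (elim n)
    have md: "mm n \<le> deg (E n) n u" if "u \<in> {1..n}" for u
      unfolding mm_def using that by (intro Min_le) auto
    have "1 - n * exp (- real (mm n) * (g - g/2)^2/4) \<le> measure_pmf.prob (em_path (E n) n k p (\<lambda>_. False) 1)
           {xs. vol (E n) n (blue_set n (xs ! 1)) / vol (E n) n {1..n} \<ge> 1 - g}"
      by (rule fast_n[OF _ _ _ md]) (use sym elim p g0 g1 kb in auto)
    also have "\<dots> \<le> measure_pmf.prob (em_path (E n) n k p (\<lambda>_. False) 1)
             {xs. vol (E n) n (blue_set n (xs ! 1)) / vol (E n) n {1..n} \<ge> 1 - \<gamma>}"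
      using g\<gamma> by (intro measure_pmf.finite_measure_mono) auto
    finally show ?case using elim by (simp add: mult.assoc)
  qed
qed (simp add: measure_pmf.prob_le_1)

lemma slow_thm:
  fixes p \<gamma> K :: real and E :: "nat \<Rightarrow> nat \<Rightarrow> nat \<Rightarrow> bool"
  assumes p: "0 \<le> p" "p < 1/2" and \<gamma>: "\<gamma> > 0" and K: "K > 0"
    and sym: "\<forall>n u v. E n u v \<longleftrightarrow> E n v u"
    and lim: "filterlim (\<lambda>n. real (Min ((\<lambda>u. deg (E n) n u) ` {1..n})) / ln (real n)) at_top sequentially"
    and k: "real k > 4 * ln (2 / min \<gamma> ((1/2 - p)/2)) / (1/2 - (p + min \<gamma> ((1/2 - p)/2)))^2"
  shows "(\<lambda>n. measure_pmf.prob (em_path (E n) n k p (\<lambda>_. False) (nat \<lfloor>real n powr K\<rfloor>))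
             {xs. \<forall>t \<le> nat \<lfloor>real n powr K\<rfloor>.
                    vol (E n) n (red_set n (xs ! t)) / vol (E n) n {1..n} \<ge> 1 - \<gamma>}) \<longlonglongrightarrow> 1"
proof (rule sandwich1)
  define \<theta> where "\<theta> = min \<gamma> ((1/2 - p)/2)"
  have \<theta>a: "\<theta> \<le> (1/2 - p)/2" and \<theta>\<gamma>: "\<theta> \<le> \<gamma>" unfolding \<theta>_def by (rule min.cobounded2, rule min.cobounded1)
  have \<theta>0: "0 < \<theta>" using \<gamma> p by (simp add: \<theta>_def)
  have \<theta>1: "\<theta> \<le> 1" using \<theta>a p by argo
  have p\<theta>: "p + \<theta> \<le> 1/2" using \<theta>a p by argo
  have d0: "1/2 - (p + \<theta>) > 0" using \<theta>a p by argo
  define mm where "mm = (\<lambda>n. Min ((\<lambda>u. deg (E n) n u) ` {1..n}))"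
  have kb: "exp (- real k * (1/2 - (p + \<theta>))^2/4) \<le> \<theta>/2"
    using k_bound[OF d0 \<theta>0] k by (simp add: \<theta>_def)
  have c0: "(\<theta> - \<theta>/2)^2/4 > 0" using \<theta>0 by simp
  have ev: "eventually (\<lambda>n. 1 \<le> mm n \<and> 1 \<le> n \<and> real n powr (K+1) * exp (- real (mm n) * ((\<theta> - \<theta>/2)^2/4)) \<le> 1 / real n) sequentially"
    by (rule asym[OF _ c0]) (use lim K in \<open>simp_all add: mm_def\<close>)
  show "eventually (\<lambda>n. 1 - 1 / real n \<le> measure_pmf.prob (em_path (E n) n k p (\<lambda>_. False) (nat \<lfloor>real n powr K\<rfloor>))
             {xs. \<forall>t \<le> nat \<lfloor>real n powr K\<rfloor>.
                    vol (E n) n (red_set n (xs ! t)) / vol (E n) n {1..n} \<ge> 1 - \<gamma>}) sequentially"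
    using ev
  proof eventually_elim
    case (elim n)
    define T where "T = nat \<lfloor>real n powr K\<rfloor>"
    define e where "e = exp (- real (mm n) * (\<theta> - \<theta>/2)^2/4)"
    have e0: "0 \<le> e" by (simp add: e_def)
    have md: "mm n \<le> deg (E n) n u" if "u \<in> {1..n}" for u
      unfolding mm_def using that by (intro Min_le) auto
    have T: "real T \<le> real n powr K"
    proof -
      have "0 \<le> \<lfloor>real n powr K\<rfloor>" by simp
      hence "real (nat \<lfloor>real n powr K\<rfloor>) = real_of_int \<lfloor>real n powr K\<rfloor>" by (simp add: of_nat_nat)
      also have "\<dots> \<le> real n powr K" by (rule of_int_floor_le)
      finally show ?thesis unfolding T_def .
    qed
    have "real T * (real n * e) \<le> real n powr K * (real n * e)"
      using T e0 by (intro mult_right_mono) auto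
    also have "\<dots> = real n powr (K+1) * e" using elim by (simp add: powr_add)
    also have "\<dots> \<le> 1 / real n" using elim by (simp add: e_def mult.assoc)
    finally have Te: "real T * (real n * e) \<le> 1 / real n" .
    have "1 - T * (n * e) \<le> measure_pmf.prob (em_path (E n) n k p (\<lambda>_. False) T)
           {xs. \<forall>t\<le>T. vol (E n) n (red_set n (xs ! t)) / vol (E n) n {1..n} \<ge> 1 - \<theta>}"
      unfolding e_def by (rule slow_n[OF _ _ _ md]) (use sym elim p \<theta>0 \<theta>1 p\<theta> kb in auto)
    also have "\<dots> \<le> measure_pmf.prob (em_path (E n) n k p (\<lambda>_. False) T)
           {xs. \<forall>t\<le>T. vol (E n) n (red_set n (xs ! t)) / vol (E n) n {1..n} \<ge> 1 - \<gamma>}"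
      using \<theta>\<gamma> by (intro measure_pmf.finite_measure_mono) auto
    finally show ?case using Te unfolding T_def by linarith
  qed
qed (simp add: measure_pmf.prob_le_1)




theorem proposition6p4:
  fixes p \<gamma> :: real
  assumes "0 \<le> p" and "p \<le> 1" and "\<gamma> > 0"
  shows "\<exists>H::real. \<forall>E :: nat \<Rightarrow> nat \<Rightarrow> nat \<Rightarrow> bool.
    ((\<forall>n u v. E n u v \<longleftrightarrow> E n v u) \<and> (\<forall>n u. \<not> E n u u) \<and>
     filterlim (\<lambda>n. real (Min ((\<lambda>u. deg (E n) n u) ` {1..n})) / ln (real n)) at_top sequentially)
    \<longrightarrow>
    (p > 1/2 \<longrightarrow> (\<forall>k::nat. real k > H \<longrightarrow>
        ((\<lambda>n. measure_pmf.prob (em_path (E n) n k p (\<lambda>_. False) 1)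
             {xs. vol (E n) n (blue_set n (xs ! 1)) / vol (E n) n {1..n} \<ge> 1 - \<gamma>})
          \<longlonglongrightarrow> 1)))
    \<and>
    (p < 1/2 \<longrightarrow> (\<forall>k::nat. real k > H \<longrightarrow> (\<forall>K::real. K > 0 \<longrightarrow>
        ((\<lambda>n. measure_pmf.prob (em_path (E n) n k p (\<lambda>_. False) (nat \<lfloor>real n powr K\<rfloor>))
             {xs. \<forall>t \<le> nat \<lfloor>real n powr K\<rfloor>.
                    vol (E n) n (red_set n (xs ! t)) / vol (E n) n {1..n} \<ge> 1 - \<gamma>})
          \<longlonglongrightarrow> 1))))"
proof -
  consider (a) "p > 1/2" | (b) "p < 1/2" | (c) "p = 1/2" by linarith
  thus ?thesis
  proof cases
    case a
    show ?thesis
      apply (rule exI[of _ "4 * ln (2 / min \<gamma> 1) / (p - 1/2)^2"])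
      apply (intro allI impI conjI)
      apply (elim conjE)
      subgoal by (rule fast_thm) (use assms in auto)
      subgoal using a by simp
      done
  next
    case b
    show ?thesis
      apply (rule exI[of _ "4 * ln (2 / min \<gamma> ((1/2 - p)/2)) / (1/2 - (p + min \<gamma> ((1/2 - p)/2)))^2"])
      apply (intro allI impI conjI)
      subgoal using b by simp
      apply (elim conjE)
      subgoal by (rule slow_thm) (use assms in auto)
      done
  next
    case c
    show ?thesis by (rule exI[of _ 0]) (simp add: c)
  qed
qed


end
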